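(* Let $T\in S(\lambda)$ be a standard Young tableau with entries $a_{ij}$. Then $$\chi^T(q)=\sum_k |S_k^T(\lambda)|q^k=\prod_{i,j}[\mathrm{dep}(a_{ij})+1]_q .$$
   Context: A shape $\lambda=(\lambda_1\ge\dots\ge\lambda_m\ge1)$ has $\lambda_i$ left-justified boxes in row $i$ (rows top to bottom, columns left to right); $N=\sum\lambda_i$. $S(\lambda)$ is the set of standard Young tableaux: fillings with $1,\dots,N$, each once, strictly increasing along rows and down columns. A row-standard filling of shape $\lambda$ uses $1,\dots,N$ each once with rows strictly increasing. Inversion pairs of a row-standard filling $\tau$: for a box $c$ and $r\ge1$ let $c^{(r)}$ be the box $r$ positions to its right, if it exists. For distinct boxes $c,c'$ in the same column with $\tau(c)<\tau(c')$, let $r\ge1$ be least such that one of $c^{(r)},c'^{(r)}$ does not exist or $\tau(c^{(r)})\neq\tau(c'^{(r)})$; $(c,c')$ is an inversion pair if either (one of them does not exist and $c$ lies below $c'$) or (both exist and $\tau(c^{(r)})>\tau(c'^{(r)})$). $S_k(\lambda)$ = row-standard fillings with exactly $k$ inversion pairs. $\mathrm{st}(\tau)$ = filling obtained by sorting each column increasingly (a standard Young tableau); $S_k^T(\lambda)=\{\tau\in S_k(\lambda):\mathrm{st}(\tau)=T\}$. For the entry $a_{ij}$ of $T$ in column $j$ with value $v$: $\mathrm{dep}(a_{ij})$ = (number of entries of column $j$ smaller than $v$) minus (number of entries of column $j+1$ smaller than $v$, or $0$ if there is no column $j+1$). $[p]_q=1+q+\dots+q^{p-1}$. *)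

theory Defs
  imports Main "HOL-Computational_Algebra.Polynomial"
begin

text \<open>A shape is a list of row lengths (weakly decreasing, all positive).
  Boxes are indexed 0-based as (row, column).\<close>

definition is_shape :: "nat list \<Rightarrow> bool" where
  "is_shape lam \<longleftrightarrow> sorted_wrt (\<ge>) lam \<and> 0 \<notin> set lam"

definition boxes :: "nat list \<Rightarrow> (nat \<times> nat) set" where
  "boxes lam = {(i, j). i < length lam \<and> j < lam ! i}"

definition size_sh :: "nat list \<Rightarrow> nat" where
  "size_sh lam = sum_list lam"

text \<open>A filling uses 1..N each once on the boxes; outside the boxes it is 0
  (so that fillings are determined by their values on the boxes).\<close>

definition is_filling :: "nat list \<Rightarrow> (nat \<times> nat \<Rightarrow> nat) \<Rightarrow> bool" where
  "is_filling lam tau \<longleftrightarrow> bij_betw tau (boxes lam) {1..size_sh lam}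
     \<and> (\<forall>c. c \<notin> boxes lam \<longrightarrow> tau c = 0)"

definition row_standard :: "nat list \<Rightarrow> (nat \<times> nat \<Rightarrow> nat) \<Rightarrow> bool" where
  "row_standard lam tau \<longleftrightarrow> is_filling lam tau \<and>
     (\<forall>i j. (i, Suc j) \<in> boxes lam \<longrightarrow> tau (i, j) < tau (i, Suc j))"

definition SYT :: "nat list \<Rightarrow> (nat \<times> nat \<Rightarrow> nat) set" where
  "SYT lam = {T. row_standard lam T \<and>
     (\<forall>i j. (Suc i, j) \<in> boxes lam \<longrightarrow> T (i, j) < T (Suc i, j))}"

definition shift :: "nat \<times> nat \<Rightarrow> nat \<Rightarrow> nat \<times> nat" where
  "shift c r = (fst c, snd c + r)"

definition inv_pairs :: "nat list \<Rightarrow> (nat \<times> nat \<Rightarrow> nat) \<Rightarrow> ((nat \<times> nat) \<times> (nat \<times> nat)) set" where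
  "inv_pairs lam tau = {(c, c'). c \<in> boxes lam \<and> c' \<in> boxes lam \<and> c \<noteq> c' \<and>
     snd c = snd c' \<and> tau c < tau c' \<and>
     (let r = (LEAST r. r \<ge> 1 \<and> (shift c r \<notin> boxes lam \<or> shift c' r \<notin> boxes lam
                        \<or> tau (shift c r) \<noteq> tau (shift c' r)))
      in ((shift c r \<notin> boxes lam \<or> shift c' r \<notin> boxes lam) \<and> fst c > fst c')
         \<or> (shift c r \<in> boxes lam \<and> shift c' r \<in> boxes lam
            \<and> tau (shift c r) > tau (shift c' r)))}"

definition inv_count :: "nat list \<Rightarrow> (nat \<times> nat \<Rightarrow> nat) \<Rightarrow> nat" where
  "inv_count lam tau = card (inv_pairs lam tau)"

definition st :: "nat list \<Rightarrow> (nat \<times> nat \<Rightarrow> nat) \<Rightarrow> (nat \<times> nat \<Rightarrow> nat)" where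
  "st lam tau = (\<lambda>(i, j). if (i, j) \<in> boxes lam
      then sorted_list_of_set {tau (i', j) | i'. (i', j) \<in> boxes lam} ! i else 0)"

definition S_k :: "nat list \<Rightarrow> nat \<Rightarrow> (nat \<times> nat \<Rightarrow> nat) set" where
  "S_k lam k = {tau. row_standard lam tau \<and> inv_count lam tau = k}"

definition S_kT :: "nat list \<Rightarrow> nat \<Rightarrow> (nat \<times> nat \<Rightarrow> nat) \<Rightarrow> (nat \<times> nat \<Rightarrow> nat) set" where
  "S_kT lam k T = {tau \<in> S_k lam k. st lam tau = T}"

text \<open>dep of the entry of T in box (i,j).  The subtraction is on nat; it is
  nonnegative for standard Young tableaux.\<close>
definition dep :: "nat list \<Rightarrow> (nat \<times> nat \<Rightarrow> nat) \<Rightarrow> nat \<times> nat \<Rightarrow> nat" where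
  "dep lam T c = (let j = snd c; v = T c in
     card {i'. (i', j) \<in> boxes lam \<and> T (i', j) < v}
     - card {i'. (i', Suc j) \<in> boxes lam \<and> T (i', Suc j) < v})"

definition qint :: "nat \<Rightarrow> int poly" where
  "qint p = (\<Sum>l<p. [:0, 1:] ^ l)"

definition chi :: "nat list \<Rightarrow> (nat \<times> nat \<Rightarrow> nat) \<Rightarrow> int poly" where
  "chi lam T = (\<Sum>k \<le> card (boxes lam) * card (boxes lam).
                  of_nat (card (S_kT lam k T)) * [:0, 1:] ^ k)"

end

theory Submission
  imports Defs
begin

definition qi :: "'a::comm_semiring_1 \<Rightarrow> nat \<Rightarrow> 'a" where
  "qi x p = (\<Sum>l<p. x ^ l)"

definition Arr :: "nat set \<Rightarrow> nat set \<Rightarrow> (nat \<Rightarrow> nat) \<Rightarrow> (nat \<Rightarrow> nat) set" where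
  "Arr R C key = {\<sigma>. bij_betw \<sigma> R C \<and> (\<forall>r. r \<notin> R \<longrightarrow> \<sigma> r = 0) \<and> (\<forall>r\<in>R. \<sigma> r < key r)}"

definition ninv :: "nat set \<Rightarrow> (nat \<Rightarrow> nat) \<Rightarrow> (nat \<Rightarrow> nat) \<Rightarrow> nat" where
  "ninv R key \<sigma> = card {(a, b). a \<in> R \<and> b \<in> R \<and> \<sigma> a < \<sigma> b \<and> key b < key a}"

lemma rank_bij:
  fixes key :: "nat \<Rightarrow> nat"
  assumes "finite S" "inj_on key S"
  shows "bij_betw (\<lambda>s. card {t\<in>S. key s < key t}) S {..<card S}"
proof -
  let ?f = "\<lambda>s. card {t\<in>S. key s < key t}"
  have inj: "inj_on ?f S"
  proof (rule inj_onI)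
    fix s t assume st: "s \<in> S" "t \<in> S" "?f s = ?f t"
    show "s = t"
    proof (rule ccontr)
      assume "s \<noteq> t"
      then have ne: "key s \<noteq> key t" using assms(2) st by (meson inj_on_def)
      have gen: "?f a < ?f b" if "a \<in> S" "b \<in> S" "key b < key a" for a b
      proof -
        have "{t\<in>S. key a < key t} \<subset> {t\<in>S. key b < key t}"
          using that by auto
        then show ?thesis using assms(1) by (intro psubset_card_mono) auto
      qed
      show False using ne gen[of s t] gen[of t s] st by (cases "key s < key t") auto
    qed
  qed
  have sub: "?f ` S \<subseteq> {..<card S}"
  proof
    fix y assume "y \<in> ?f ` S"
    then obtain s where s: "s \<in> S" "y = ?f s" by auto
    have "{t\<in>S. key s < key t} \<subseteq> S - {s}" by auto
    then have "?f s \<le> card (S - {s})" using assms(1) by (intro card_mono) auto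
    also have "\<dots> < card S" using s assms(1) by (metis card_Diff1_less)
    finally show "y \<in> {..<card S}" using s by simp
  qed
  have "?f ` S = {..<card S}"
    using sub inj by (intro card_subset_eq) (auto simp: card_image)
  then show ?thesis using inj by (simp add: bij_betw_def)
qed

lemma sum_rank:
  fixes key :: "nat \<Rightarrow> nat" and x :: "'a::comm_semiring_1"
  assumes "finite S" "inj_on key S"
  shows "(\<Sum>s\<in>S. x ^ card {t\<in>S. key s < key t}) = qi x (card S)"
  unfolding qi_def
  using sum.reindex_bij_betw[OF rank_bij[OF assms], of "\<lambda>l. x ^ l"] by simp

lemma ninv_upd:
  assumes r0: "r0 \<in> R" and fin: "finite R" and sig: "\<sigma>' ` (R - {r0}) \<subseteq> C" and mC: "\<forall>v\<in>C. v < m"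
  shows "ninv R key (\<sigma>'(r0 := m)) = ninv (R - {r0}) key \<sigma>' + card {r\<in>R. key r0 < key r}"
proof -
  let ?s = "\<sigma>'(r0 := m)"
  define P where "P = {(a, b). a \<in> R - {r0} \<and> b \<in> R - {r0} \<and> \<sigma>' a < \<sigma>' b \<and> key b < key a}"
  define Q where "Q = (\<lambda>a. (a, r0)) ` {r\<in>R. key r0 < key r}"
  have eq: "{(a, b). a \<in> R \<and> b \<in> R \<and> ?s a < ?s b \<and> key b < key a} = P \<union> Q"
  proof (rule set_eqI, clarify)
    fix a b
    show "((a, b) \<in> {(a, b). a \<in> R \<and> b \<in> R \<and> ?s a < ?s b \<and> key b < key a}) = ((a, b) \<in> P \<union> Q)"
    proof (cases "a = r0")
      case True
      have "\<not> (m < ?s b)" if "b \<in> R"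
      proof (cases "b = r0")
        case False
        then have "\<sigma>' b \<in> C" using sig that by auto
        then show ?thesis using mC False by auto
      qed simp
      then show ?thesis using True unfolding P_def Q_def by auto
    next
      case False
      show ?thesis
      proof (cases "b = r0")
        case True
        have "\<sigma>' a < m" if "a \<in> R" using sig that False mC by auto
        then show ?thesis using True False r0 unfolding P_def Q_def by auto
      next
        case False2: False
        then show ?thesis using False unfolding P_def Q_def by auto
      qed
    qed
  qed
  have "P \<subseteq> R \<times> R" unfolding P_def by auto
  then have "finite P" using fin by (meson finite_SigmaI finite_subset)
  moreover have "finite Q" unfolding Q_def using fin by auto
  moreover have "P \<inter> Q = {}" unfolding P_def Q_def by auto
  ultimately have "card (P \<union> Q) = card P + card Q" by (simp add: card_Un_disjoint)
  moreover have "card Q = card {r\<in>R. key r0 < key r}" unfolding Q_def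
    by (rule card_image) (auto simp: inj_on_def)
  ultimately show ?thesis unfolding ninv_def eq P_def by simp
qed


lemma finite_Arr: "finite R \<Longrightarrow> finite C \<Longrightarrow> finite (Arr R C key)"
proof -
  assume "finite R" "finite C"
  then have "finite {f. \<forall>x. (x \<in> R \<longrightarrow> f x \<in> C) \<and> (x \<notin> R \<longrightarrow> f x = (0::nat))}"
    by (rule finite_set_of_finite_funs)
  moreover have "Arr R C key \<subseteq> {f. \<forall>x. (x \<in> R \<longrightarrow> f x \<in> C) \<and> (x \<notin> R \<longrightarrow> f x = (0::nat))}"
    unfolding Arr_def by (auto simp: bij_betw_def)
  ultimately show ?thesis by (rule finite_subset[rotated])
qed

lemma core:
  fixes x :: "'a::comm_semiring_1" and key :: "nat \<Rightarrow> nat"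
  shows "finite R \<Longrightarrow> finite C \<Longrightarrow> card R = card C \<Longrightarrow> inj_on key R \<Longrightarrow>
    (\<Sum>\<sigma>\<in>Arr R C key. x ^ ninv R key \<sigma>) =
    (\<Prod>v\<in>C. qi x (card {r\<in>R. v < key r} - card {v'\<in>C. v < v'}))"
proof (induction "card C" arbitrary: R C)
  case 0
  then have "C = {}" "R = {}" by auto
  moreover have "Arr {} {} key = {\<lambda>_. 0}" unfolding Arr_def by (auto simp: bij_betw_def)
  moreover have "ninv {} key (\<lambda>_. 0) = 0" unfolding ninv_def by simp
  ultimately show ?case by simp
next
  case (Suc n)
  have Cne: "C \<noteq> {}" using Suc.hyps(2) by auto
  define m where "m = Max C"
  have mC: "m \<in> C" using Cne Suc.prems m_def by simp
  have mMax: "\<forall>v\<in>C - {m}. v < m" using Suc.prems(1,2) m_def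
    by (metis Diff_iff Max_ge le_neq_implies_less singletonI)
  define R' where "R' = {r\<in>R. m < key r}"
  define C' where "C' = C - {m}"
  define SG where "SG = Sigma R' (\<lambda>r0. Arr (R - {r0}) C' key)"
  define g where "g = (\<lambda>(r0::nat, \<sigma>'::nat\<Rightarrow>nat). \<sigma>'(r0 := m))"
  define h where "h = (\<lambda>\<sigma>::nat\<Rightarrow>nat. (the_inv_into R \<sigma> m, \<sigma>(the_inv_into R \<sigma> m := 0)))"
  have finR: "finite R" and finC: "finite C" and cRC: "card R = card C" and inj: "inj_on key R"
    using Suc.prems by auto
  have g_in: "g p \<in> Arr R C key" if "p \<in> SG" for p
  proof -
    obtain r0 \<sigma>' where p: "p = (r0, \<sigma>')" by (cases p)
    have r0: "r0 \<in> R" "m < key r0" using that p unfolding SG_def R'_def by auto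
    have s': "bij_betw \<sigma>' (R - {r0}) C'" "\<forall>r. r \<notin> R - {r0} \<longrightarrow> \<sigma>' r = 0"
      "\<forall>r\<in>R - {r0}. \<sigma>' r < key r"
      using that p unfolding SG_def Arr_def by auto
    have img: "\<sigma>' ` (R - {r0}) = C'" "inj_on \<sigma>' (R - {r0})" using s'(1) by (auto simp: bij_betw_def)
    have nm: "\<sigma>' y \<noteq> m" if "y \<in> R" "y \<noteq> r0" for y
    proof
      assume "\<sigma>' y = m"
      then have "m \<in> C'" using img(1) that by (metis DiffI image_eqI singletonD)
      then show False unfolding C'_def by simp
    qed
    have "inj_on (\<sigma>'(r0 := m)) R"
    proof (rule inj_onI)
      fix a b assume ab: "a \<in> R" "b \<in> R" "(\<sigma>'(r0 := m)) a = (\<sigma>'(r0 := m)) b"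
      show "a = b" using ab nm img(2) by (cases "a = r0"; cases "b = r0") (auto simp: inj_on_def)
    qed
    moreover have "(\<sigma>'(r0 := m)) ` R = C"
    proof -
      have "R = insert r0 (R - {r0})" using r0 by auto
      then have "(\<sigma>'(r0 := m)) ` R = insert m (\<sigma>' ` (R - {r0}))" by (metis fun_upd_image Diff_iff insertI1 image_cong fun_upd_other singletonD)
      also have "\<dots> = C" using s'(1) mC unfolding bij_betw_def C'_def by auto
      finally show ?thesis .
    qed
    ultimately show ?thesis using s' r0 p unfolding Arr_def g_def bij_betw_def by auto
  qed
  have h_props: "fst (h \<sigma>) \<in> R'" "snd (h \<sigma>) \<in> Arr (R - {fst (h \<sigma>)}) C' key" "g (h \<sigma>) = \<sigma>"
    if "\<sigma> \<in> Arr R C key" for \<sigma>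
  proof -
    have s: "inj_on \<sigma> R" "\<sigma> ` R = C" "\<forall>r. r \<notin> R \<longrightarrow> \<sigma> r = 0" "\<forall>r\<in>R. \<sigma> r < key r"
      using that unfolding Arr_def bij_betw_def by auto
    define r0 where "r0 = the_inv_into R \<sigma> m"
    have r0R: "r0 \<in> R" unfolding r0_def using s mC by (intro the_inv_into_into) auto
    have sr0: "\<sigma> r0 = m" unfolding r0_def using s mC by (intro f_the_inv_into_f) auto
    have hs: "h \<sigma> = (r0, \<sigma>(r0 := 0))" unfolding h_def r0_def by simp
    show "fst (h \<sigma>) \<in> R'" using hs r0R sr0 s(4) unfolding R'_def by force
    have "bij_betw (\<sigma>(r0 := 0)) (R - {r0}) C'"
    proof -
      have "bij_betw \<sigma> (R - {r0}) (C - {m})"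
        using s r0R sr0 unfolding bij_betw_def
        by (auto simp: inj_on_image_set_diff inj_on_subset)
      then show ?thesis unfolding C'_def by (rule bij_betw_cong[THEN iffD1, rotated]) auto
    qed
    then show "snd (h \<sigma>) \<in> Arr (R - {fst (h \<sigma>)}) C' key"
      using hs s unfolding Arr_def by auto
    show "g (h \<sigma>) = \<sigma>" using hs sr0 unfolding g_def by auto
  qed
  have hg: "h (g p) = p" if "p \<in> SG" for p
  proof -
    obtain r0 \<sigma>' where p: "p = (r0, \<sigma>')" by (cases p)
    have r0: "r0 \<in> R" using that p unfolding SG_def R'_def by auto
    have s0: "\<sigma>' r0 = 0" using that p unfolding SG_def Arr_def by auto
    have "inj_on (g p) R" using g_in[OF that] unfolding Arr_def bij_betw_def by auto
    then have "the_inv_into R (g p) m = r0" using r0 p unfolding g_def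
      by (metis case_prod_conv fun_upd_same the_inv_into_f_f)
    then show ?thesis using p s0 unfolding h_def g_def by auto
  qed
  define c where "c = (\<lambda>r0. card {r\<in>R. key r0 < key r})"
  define P where "P = (\<Prod>v\<in>C'. qi x (card {r\<in>R. v < key r} - card {v'\<in>C. v < v'}))"
  have finR': "finite R'" using finR unfolding R'_def by auto
  have finC': "finite C'" using finC unfolding C'_def by auto
  have S1': "(\<Sum>p\<in>SG. x ^ ninv R key (g p)) = (\<Sum>\<sigma>\<in>Arr R C key. x ^ ninv R key \<sigma>)"
  proof (rule sum.reindex_bij_witness[where i=h and j=g])
    show "\<And>a. a \<in> SG \<Longrightarrow> h (g a) = a" by (rule hg)
    show "\<And>a. a \<in> SG \<Longrightarrow> g a \<in> Arr R C key" by (rule g_in)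
    show "\<And>b. b \<in> Arr R C key \<Longrightarrow> g (h b) = b" using h_props by blast
    show "\<And>b. b \<in> Arr R C key \<Longrightarrow> h b \<in> SG"
      using h_props unfolding SG_def by (metis mem_Sigma_iff prod.collapse)
  qed simp
  note S1 = S1'[symmetric]
  have S2: "(\<Sum>p\<in>SG. x ^ ninv R key (g p)) =
     (\<Sum>r0\<in>R'. \<Sum>\<sigma>'\<in>Arr (R - {r0}) C' key. x ^ (ninv (R - {r0}) key \<sigma>' + c r0))"
  proof -
    have "(\<Sum>p\<in>SG. x ^ ninv R key (g p)) = (\<Sum>r0\<in>R'. \<Sum>\<sigma>'\<in>Arr (R - {r0}) C' key. x ^ ninv R key (g (r0, \<sigma>')))"
      unfolding SG_def using finR' finR finC'
      by (subst sum.Sigma) (auto intro!: finite_Arr)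
    also have "\<dots> = (\<Sum>r0\<in>R'. \<Sum>\<sigma>'\<in>Arr (R - {r0}) C' key. x ^ (ninv (R - {r0}) key \<sigma>' + c r0))"
    proof (intro sum.cong refl)
      fix r0 \<sigma>' assume r0: "r0 \<in> R'" and s: "\<sigma>' \<in> Arr (R - {r0}) C' key"
      have "\<sigma>' ` (R - {r0}) \<subseteq> C'" using s unfolding Arr_def bij_betw_def by auto
      then show "x ^ ninv R key (g (r0, \<sigma>')) = x ^ (ninv (R - {r0}) key \<sigma>' + c r0)"
        unfolding g_def c_def using ninv_upd[of r0 R \<sigma>' C' m key] r0 finR mMax
        unfolding R'_def C'_def by auto
    qed
    finally show ?thesis .
  qed
  have S3: "(\<Sum>\<sigma>'\<in>Arr (R - {r0}) C' key. x ^ (ninv (R - {r0}) key \<sigma>' + c r0)) = x ^ c r0 * P"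
    if r0: "r0 \<in> R'" for r0
  proof -
    have r0R: "r0 \<in> R" "m < key r0" using r0 unfolding R'_def by auto
    have "card C' = n" using Suc.hyps(2) mC finC unfolding C'_def by simp
    moreover have "card (R - {r0}) = card C'" using cRC r0R finR mC finC unfolding C'_def by simp
    ultimately have IH: "(\<Sum>\<sigma>\<in>Arr (R - {r0}) C' key. x ^ ninv (R - {r0}) key \<sigma>) =
      (\<Prod>v\<in>C'. qi x (card {r\<in>R - {r0}. v < key r} - card {v'\<in>C'. v < v'}))"
      using Suc.hyps(1)[of C' "R - {r0}"] finR finC inj unfolding C'_def
      by (auto intro: inj_on_subset)
    have fac: "card {r\<in>R - {r0}. v < key r} - card {v'\<in>C'. v < v'} =
        card {r\<in>R. v < key r} - card {v'\<in>C. v < v'}" if v: "v \<in> C'" for v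
    proof -
      have vm: "v < m" using v mMax unfolding C'_def by auto
      have e1: "{r\<in>R - {r0}. v < key r} = {r\<in>R. v < key r} - {r0}" by auto
      have e2: "{v'\<in>C'. v < v'} = {v'\<in>C. v < v'} - {m}" unfolding C'_def by auto
      have i1: "r0 \<in> {r\<in>R. v < key r}" using r0R vm by auto
      have i2: "m \<in> {v'\<in>C. v < v'}" using mC vm by auto
      have f1: "finite {r\<in>R. v < key r}" using finR by auto
      have f2: "finite {v'\<in>C. v < v'}" using finC by auto
      have "card {r\<in>R. v < key r} \<ge> 1" "card {v'\<in>C. v < v'} \<ge> 1"
        using i1 i2 f1 f2 by (auto simp: Suc_le_eq card_gt_0_iff)
      then show ?thesis unfolding e1 e2 using i1 i2 f1 f2 by (simp add: card_Diff_singleton)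
    qed
    have "(\<Sum>\<sigma>'\<in>Arr (R - {r0}) C' key. x ^ (ninv (R - {r0}) key \<sigma>' + c r0)) =
        x ^ c r0 * (\<Sum>\<sigma>\<in>Arr (R - {r0}) C' key. x ^ ninv (R - {r0}) key \<sigma>)"
      by (simp add: power_add sum_distrib_left mult.commute)
    also have "\<dots> = x ^ c r0 * P" unfolding IH P_def using fac by (auto intro!: prod.cong)
    finally show ?thesis .
  qed
  have S4: "(\<Sum>r0\<in>R'. x ^ c r0 * P) = qi x (card R') * P"
  proof -
    have "c r0 = card {t\<in>R'. key r0 < key t}" if "r0 \<in> R'" for r0
    proof -
      have "{r\<in>R. key r0 < key r} = {t\<in>R'. key r0 < key t}" using that unfolding R'_def by auto
      then show ?thesis unfolding c_def by simp
    qed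
    then have "(\<Sum>r0\<in>R'. x ^ c r0) = (\<Sum>r0\<in>R'. x ^ card {t\<in>R'. key r0 < key t})"
      by (intro sum.cong) auto
    also have "\<dots> = qi x (card R')"
      using sum_rank[OF finR', of key x] inj_on_subset[OF inj, of R'] unfolding R'_def by auto
    finally have "(\<Sum>r0\<in>R'. x ^ c r0) = qi x (card R')" .
    then show ?thesis by (metis sum_distrib_right)
  qed
  have S5: "(\<Prod>v\<in>C. qi x (card {r\<in>R. v < key r} - card {v'\<in>C. v < v'})) = qi x (card R') * P"
  proof -
    have "v' \<le> m" if "v' \<in> C" for v' unfolding m_def using finC that by simp
    then have "{v'\<in>C. m < v'} = {}" using leD by blast
    then have e: "card {v'\<in>C. m < v'} = 0" by (metis card.empty)
    show ?thesis unfolding P_def C'_def R'_def by (subst prod.remove[OF finC mC]) (simp only: e diff_zero)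
  qed
  show ?case unfolding S1 S2 using S3 S4 S5 by simp
qed


definition Rows :: "nat list \<Rightarrow> nat \<Rightarrow> nat set" where
  "Rows lam j = {i. (i, j) \<in> boxes lam}"

definition colset :: "nat list \<Rightarrow> (nat \<times> nat \<Rightarrow> nat) \<Rightarrow> nat \<Rightarrow> nat set" where
  "colset lam f j = (\<lambda>i. f (i, j)) ` Rows lam j"

lemma box_col: assumes "(i, j) \<in> boxes lam" shows "j < size_sh lam"
proof -
  have "i < length lam" "j < lam ! i" using assms by (auto simp: boxes_def)
  then show ?thesis using elem_le_sum_list[of i lam] unfolding size_sh_def by linarith
qed

lemma finite_boxes: "finite (boxes lam)"
proof -
  have "boxes lam \<subseteq> {..<length lam} \<times> {..<size_sh lam}"
    using box_col by (auto simp: boxes_def)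
  then show ?thesis by (rule finite_subset) auto
qed

lemma finite_Rows: "finite (Rows lam j)"
proof -
  have "Rows lam j = fst ` (boxes lam \<inter> {c. snd c = j})" unfolding Rows_def by force
  then show ?thesis using finite_boxes by simp
qed

lemma shape_down: "is_shape lam \<Longrightarrow> (i, j) \<in> boxes lam \<Longrightarrow> i' \<le> i \<Longrightarrow> (i', j) \<in> boxes lam"
  unfolding is_shape_def boxes_def
  by (auto simp: sorted_wrt_iff_nth_less, metis le_neq_implies_less order_less_le_trans)

lemma Rows_eq: assumes "is_shape lam" shows "Rows lam j = {..<card (Rows lam j)}"
proof -
  obtain i0 where "i0 \<notin> Rows lam j" using finite_Rows ex_new_if_finite infinite_UNIV_nat by blast
  define k where "k = (LEAST i. i \<notin> Rows lam j)"
  have k: "k \<notin> Rows lam j" unfolding k_def by (rule LeastI) fact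
  have "Rows lam j = {..<k}"
  proof
    show "Rows lam j \<subseteq> {..<k}"
    proof
      fix i assume "i \<in> Rows lam j"
      then have "i' \<in> Rows lam j" if "i' \<le> i" for i' using shape_down[OF assms] that unfolding Rows_def by auto
      then show "i \<in> {..<k}" using k by (metis lessThan_iff not_le_imp_less)
    qed
    show "{..<k} \<subseteq> Rows lam j" unfolding k_def using not_less_Least by auto
  qed
  then show ?thesis by simp
qed

lemma SYT_facts:
  assumes "T \<in> SYT lam"
  shows "bij_betw T (boxes lam) {1..size_sh lam}" "\<And>c. c \<notin> boxes lam \<Longrightarrow> T c = 0"
    "\<And>i j. (i, Suc j) \<in> boxes lam \<Longrightarrow> T (i, j) < T (i, Suc j)"
    "\<And>i j. (Suc i, j) \<in> boxes lam \<Longrightarrow> T (i, j) < T (Suc i, j)"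
  using assms unfolding SYT_def row_standard_def is_filling_def by auto

lemma SYT_col_mono:
  assumes "is_shape lam" "T \<in> SYT lam" "(i', j) \<in> boxes lam" "i < i'"
  shows "T (i, j) < T (i', j)"
  using assms(3,4)
proof (induction i')
  case 0 then show ?case by simp
next
  case (Suc k)
  have kb: "(k, j) \<in> boxes lam" using shape_down[OF assms(1) Suc.prems(1)] by simp
  have "T (k, j) < T (Suc k, j)" using SYT_facts(4)[OF assms(2) Suc.prems(1)] .
  then show ?case using Suc kb by (cases "i = k") auto
qed

lemma st_alt: "st lam tau = (\<lambda>(i, j). if (i, j) \<in> boxes lam
      then sorted_list_of_set (colset lam tau j) ! i else 0)"
proof (rule ext)
  fix c :: "nat \<times> nat"
  obtain i j where c: "c = (i, j)" by (cases c)
  have "{tau (i', j) |i'. (i', j) \<in> boxes lam} = colset lam tau j"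
    unfolding colset_def Rows_def by auto
  then show "st lam tau c = (\<lambda>(i, j). if (i, j) \<in> boxes lam
      then sorted_list_of_set (colset lam tau j) ! i else 0) c"
    unfolding st_def c by simp
qed

lemma st_cong: assumes "\<And>j. colset lam tau j = colset lam tau' j" shows "st lam tau = st lam tau'"
proof (rule ext)
  fix c :: "nat \<times> nat"
  obtain i j where c: "c = (i, j)" by (cases c)
  show "st lam tau c = st lam tau' c" unfolding st_alt c using assms[of j] by simp
qed

lemma sorted_col:
  assumes "is_shape lam" "inj_on (\<lambda>i. tau (i, j)) (Rows lam j)"
    "\<And>i i'. i' \<in> Rows lam j \<Longrightarrow> i < i' \<Longrightarrow> tau (i, j) < tau (i', j)"
  shows "sorted_list_of_set (colset lam tau j) = map (\<lambda>i. tau (i, j)) [0..<card (Rows lam j)]"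
proof -
  let ?h = "card (Rows lam j)"
  have R: "Rows lam j = {..<?h}" by (rule Rows_eq[OF assms(1)])
  let ?l = "map (\<lambda>i. tau (i, j)) [0..<?h]"
  have "sorted_wrt (<) ?l"
    unfolding sorted_wrt_iff_nth_less using assms(3) R by auto
  moreover have "set ?l = colset lam tau j" unfolding colset_def using R by (metis atLeast_upt set_map)
  moreover have "length ?l = card (colset lam tau j)"
    unfolding colset_def using card_image[OF assms(2)] by simp
  ultimately show ?thesis using finite_Rows unfolding colset_def
    by (subst sorted_list_of_set_unique[symmetric]) auto
qed

lemma st_T: assumes "is_shape lam" "T \<in> SYT lam" shows "st lam T = T"
proof
  fix c :: "nat \<times> nat"
  obtain i j where c: "c = (i, j)" by (cases c)
  show "st lam T c = T c"
  proof (cases "c \<in> boxes lam")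
    case True
    have inj: "inj_on (\<lambda>i. T (i, j)) (Rows lam j)"
      using SYT_facts(1)[OF assms(2)] unfolding bij_betw_def inj_on_def Rows_def by auto
    have "i < card (Rows lam j)" using True c Rows_eq[OF assms(1), of j] unfolding Rows_def by blast
    then show ?thesis unfolding st_alt c using True c sorted_col[OF assms(1) inj] SYT_col_mono[OF assms]
      unfolding Rows_def by auto
  next
    case False
    then show ?thesis unfolding st_alt c using SYT_facts(2)[OF assms(2)] c by auto
  qed
qed

lemma colset_st:
  assumes "is_shape lam" "inj_on (\<lambda>i. tau (i, j)) (Rows lam j)"
  shows "colset lam (st lam tau) j = colset lam tau j"
proof -
  let ?L = "sorted_list_of_set (colset lam tau j)"
  have len: "length ?L = card (Rows lam j)" unfolding colset_def using card_image[OF assms(2)] by simp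
  have R: "Rows lam j = {..<card (Rows lam j)}" by (rule Rows_eq[OF assms(1)])
  have "colset lam (st lam tau) j = (\<lambda>i. ?L ! i) ` Rows lam j"
    unfolding colset_def st_alt Rows_def by auto
  also have "\<dots> = set ?L" using R len by (metis atLeast_upt map_nth set_map)
  also have "\<dots> = colset lam tau j" using finite_Rows unfolding colset_def by simp
  finally show ?thesis .
qed


definition keyf :: "nat list \<Rightarrow> (nat \<times> nat \<Rightarrow> nat) \<Rightarrow> nat \<Rightarrow> nat \<Rightarrow> nat" where
  "keyf lam tau j i = (if (i, Suc j) \<in> boxes lam then tau (i, Suc j) else size_sh lam + 1 + i)"

definition invcol :: "nat list \<Rightarrow> (nat \<times> nat \<Rightarrow> nat) \<Rightarrow> nat \<Rightarrow> nat" where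
  "invcol lam tau j = ninv (Rows lam j) (keyf lam tau j) (\<lambda>i. tau (i, j))"

definition wt :: "nat list \<Rightarrow> (nat \<times> nat \<Rightarrow> nat) \<Rightarrow> nat \<Rightarrow> nat" where
  "wt lam tau j = (\<Sum>j'\<in>{j..<size_sh lam}. invcol lam tau j')"

definition Fj :: "nat list \<Rightarrow> (nat \<times> nat \<Rightarrow> nat) \<Rightarrow> nat \<Rightarrow> (nat \<times> nat \<Rightarrow> nat) set" where
  "Fj lam T j = {tau. (\<forall>c. (c \<notin> boxes lam \<or> snd c < j) \<longrightarrow> tau c = 0)
     \<and> (\<forall>j'\<ge>j. bij_betw (\<lambda>i. tau (i, j')) (Rows lam j') (colset lam T j'))
     \<and> (\<forall>i j'. j \<le> j' \<longrightarrow> (i, Suc j') \<in> boxes lam \<longrightarrow> tau (i, j') < tau (i, Suc j'))}"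

lemma filling_facts:
  assumes "is_filling lam tau"
  shows "inj_on tau (boxes lam)" "\<And>c. c \<in> boxes lam \<Longrightarrow> tau c \<le> size_sh lam"
    "\<And>c. c \<in> boxes lam \<Longrightarrow> 1 \<le> tau c"
  using assms unfolding is_filling_def bij_betw_def by auto

lemma pair_cond:
  assumes shp: "is_shape lam" and fil: "is_filling lam tau"
    and c: "c \<in> boxes lam" and c': "c' \<in> boxes lam" and ne: "c \<noteq> c'" and sn: "snd c = snd c'"
  shows "(let r = (LEAST r. r \<ge> 1 \<and> (shift c r \<notin> boxes lam \<or> shift c' r \<notin> boxes lam
                        \<or> tau (shift c r) \<noteq> tau (shift c' r)))
      in ((shift c r \<notin> boxes lam \<or> shift c' r \<notin> boxes lam) \<and> fst c > fst c')
         \<or> (shift c r \<in> boxes lam \<and> shift c' r \<in> boxes lam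
            \<and> tau (shift c r) > tau (shift c' r)))
     \<longleftrightarrow> keyf lam tau (snd c) (fst c') < keyf lam tau (snd c) (fst c)"
proof -
  obtain a j b where cc: "c = (a, j)" "c' = (b, j)" using sn by (metis prod.collapse)
  have ab: "a \<noteq> b" using ne cc by auto
  have sh: "shift c 1 = (a, Suc j)" "shift c' 1 = (b, Suc j)" unfolding shift_def cc by auto
  have L: "(LEAST r. r \<ge> 1 \<and> (shift c r \<notin> boxes lam \<or> shift c' r \<notin> boxes lam
                        \<or> tau (shift c r) \<noteq> tau (shift c' r))) = 1"
  proof (rule Least_equality)
    have "tau (a, Suc j) \<noteq> tau (b, Suc j)" if "(a, Suc j) \<in> boxes lam" "(b, Suc j) \<in> boxes lam"
      using filling_facts(1)[OF fil] that ab unfolding inj_on_def by blast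
    then show "1 \<ge> (1::nat) \<and> (shift c 1 \<notin> boxes lam \<or> shift c' 1 \<notin> boxes lam
                        \<or> tau (shift c 1) \<noteq> tau (shift c' 1))" unfolding sh by auto
  qed simp
  have bound: "tau (i, Suc j) \<le> size_sh lam" if "(i, Suc j) \<in> boxes lam" for i
    using filling_facts(2)[OF fil that] .
  have mixed: "i < i'" if "(i, Suc j) \<in> boxes lam" "(i', Suc j) \<notin> boxes lam" for i i'
    using shape_down[OF shp that(1), of i'] that(2) by (metis not_less)
  have "(let r = (LEAST r. r \<ge> 1 \<and> (shift c r \<notin> boxes lam \<or> shift c' r \<notin> boxes lam
                        \<or> tau (shift c r) \<noteq> tau (shift c' r)))
      in ((shift c r \<notin> boxes lam \<or> shift c' r \<notin> boxes lam) \<and> fst c > fst c')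
         \<or> (shift c r \<in> boxes lam \<and> shift c' r \<in> boxes lam
            \<and> tau (shift c r) > tau (shift c' r)))
     \<longleftrightarrow> ((((a, Suc j) \<notin> boxes lam \<or> (b, Suc j) \<notin> boxes lam) \<and> a > b)
         \<or> ((a, Suc j) \<in> boxes lam \<and> (b, Suc j) \<in> boxes lam
            \<and> tau (a, Suc j) > tau (b, Suc j)))"
    unfolding Let_def L sh using cc by simp
  also have "\<dots> \<longleftrightarrow> keyf lam tau (snd c) (fst c') < keyf lam tau (snd c) (fst c)"
    unfolding keyf_def cc using bound[of a] bound[of b] mixed[of a b] mixed[of b a]
    by (cases "(a, Suc j) \<in> boxes lam"; cases "(b, Suc j) \<in> boxes lam") auto
  finally show ?thesis .
qed

lemma inv_eq:
  assumes shp: "is_shape lam" and fil: "is_filling lam tau"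
  shows "inv_count lam tau = wt lam tau 0"
proof -
  define P where "P = (\<lambda>j. {(a, b). a \<in> Rows lam j \<and> b \<in> Rows lam j \<and> tau (a, j) < tau (b, j)
      \<and> keyf lam tau j b < keyf lam tau j a})"
  define E where "E = (\<lambda>j. (\<lambda>(a, b). ((a, j), (b, j))) ` P j)"
  have eq: "inv_pairs lam tau = (\<Union>j\<in>{..<size_sh lam}. E j)"
  proof (rule set_eqI)
    fix p :: "(nat \<times> nat) \<times> (nat \<times> nat)"
    obtain a j b j' where p: "p = ((a, j), (b, j'))" by (metis prod.collapse)
    show "p \<in> inv_pairs lam tau \<longleftrightarrow> p \<in> (\<Union>j\<in>{..<size_sh lam}. E j)"
    proof
      assume "p \<in> inv_pairs lam tau"
      then have h: "(a, j) \<in> boxes lam" "(b, j') \<in> boxes lam" "(a, j) \<noteq> (b, j')" "j = j'"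
        "tau (a, j) < tau (b, j')"
        "(let r = (LEAST r. r \<ge> 1 \<and> (shift (a, j) r \<notin> boxes lam \<or> shift (b, j') r \<notin> boxes lam
                        \<or> tau (shift (a, j) r) \<noteq> tau (shift (b, j') r)))
      in ((shift (a, j) r \<notin> boxes lam \<or> shift (b, j') r \<notin> boxes lam) \<and> fst (a, j) > fst (b, j'))
         \<or> (shift (a, j) r \<in> boxes lam \<and> shift (b, j') r \<in> boxes lam
            \<and> tau (shift (a, j) r) > tau (shift (b, j') r)))"
        unfolding inv_pairs_def p by auto
      have k: "keyf lam tau j b < keyf lam tau j a"
        using pair_cond[OF shp fil h(1,2,3)] h(4,6) by simp
      have "(a, b) \<in> P j" unfolding P_def Rows_def using h k by auto
      then have "p \<in> E j" unfolding E_def p h(4) by force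
      moreover have "j < size_sh lam" using box_col h(1) by blast
      ultimately show "p \<in> (\<Union>j\<in>{..<size_sh lam}. E j)" by auto
    next
      assume "p \<in> (\<Union>j\<in>{..<size_sh lam}. E j)"
      then obtain j0 where "j0 < size_sh lam" "p \<in> E j0" by auto
      then have h: "j = j0" "j' = j0" "(a, b) \<in> P j0" unfolding E_def p by auto
      then have h2: "(a, j) \<in> boxes lam" "(b, j') \<in> boxes lam" "tau (a, j) < tau (b, j')"
         "keyf lam tau j b < keyf lam tau j a"
        unfolding P_def Rows_def by auto
      then have ne: "(a, j) \<noteq> (b, j')" by auto
      show "p \<in> inv_pairs lam tau"
        using pair_cond[OF shp fil h2(1,2) ne] h2 h(1,2) unfolding inv_pairs_def p by auto
    qed
  qed
  have finP: "finite (P j)" for j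
  proof -
    have "P j \<subseteq> Rows lam j \<times> Rows lam j" unfolding P_def by auto
    then show ?thesis using finite_Rows by (meson finite_SigmaI finite_subset)
  qed
  have "card (\<Union>j\<in>{..<size_sh lam}. E j) = (\<Sum>j\<in>{..<size_sh lam}. card (E j))"
    by (rule card_UN_disjoint) (auto simp: E_def finP)
  also have "\<dots> = (\<Sum>j\<in>{..<size_sh lam}. card (P j))"
    unfolding E_def by (intro sum.cong refl card_image) (auto simp: inj_on_def)
  also have "\<dots> = wt lam tau 0"
    unfolding wt_def invcol_def ninv_def P_def by (simp add: atLeast0LessThan)
  finally show ?thesis unfolding inv_count_def eq .
qed

lemma card_boxes: "T \<in> SYT lam \<Longrightarrow> card (boxes lam) = size_sh lam"
  using SYT_facts(1) bij_betw_same_card by fastforce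

lemma F0_eq:
  assumes shp: "is_shape lam" and TS: "T \<in> SYT lam"
  shows "{tau. row_standard lam tau \<and> st lam tau = T} = Fj lam T 0"
proof (rule set_eqI, rule iffI)
  fix tau assume "tau \<in> {tau. row_standard lam tau \<and> st lam tau = T}"
  then have rs: "row_standard lam tau" and stt: "st lam tau = T" by auto
  have fil: "is_filling lam tau" using rs unfolding row_standard_def by auto
  have inj: "inj_on (\<lambda>i. tau (i, j)) (Rows lam j)" for j
    using filling_facts(1)[OF fil] unfolding inj_on_def Rows_def by auto
  have "colset lam tau j = colset lam T j" for j
    using colset_st[OF shp inj, of j] stt by simp
  then have "bij_betw (\<lambda>i. tau (i, j)) (Rows lam j) (colset lam T j)" for j
    using inj unfolding bij_betw_def colset_def by metis
  then show "tau \<in> Fj lam T 0" unfolding Fj_def using rs fil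
    unfolding row_standard_def is_filling_def by auto
next
  fix tau assume "tau \<in> Fj lam T 0"
  then have z: "\<And>c. c \<notin> boxes lam \<Longrightarrow> tau c = 0"
    and bj: "\<And>j. bij_betw (\<lambda>i. tau (i, j)) (Rows lam j) (colset lam T j)"
    and rw: "\<And>i j. (i, Suc j) \<in> boxes lam \<Longrightarrow> tau (i, j) < tau (i, Suc j)"
    unfolding Fj_def by auto
  have cs: "colset lam tau j = colset lam T j" for j
    using bj[of j] unfolding bij_betw_def colset_def by simp
  have img: "tau ` boxes lam = T ` boxes lam"
  proof -
    have "f ` boxes lam = (\<Union>j. colset lam f j)" for f :: "nat \<times> nat \<Rightarrow> nat"
      unfolding colset_def Rows_def by force
    then show ?thesis using cs by simp
  qed
  have TB: "T ` boxes lam = {1..size_sh lam}" using SYT_facts(1)[OF TS] unfolding bij_betw_def by simp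
  have "inj_on tau (boxes lam)"
    using img TB card_boxes[OF TS] finite_boxes by (intro eq_card_imp_inj_on) auto
  then have fil: "is_filling lam tau" unfolding is_filling_def bij_betw_def using img TB z by auto
  have "st lam tau = st lam T" using cs by (rule st_cong)
  then have "st lam tau = T" using st_T[OF shp TS] by simp
  then show "tau \<in> {tau. row_standard lam tau \<and> st lam tau = T}"
    using fil rw unfolding row_standard_def by auto
qed


lemma colset_range: "T \<in> SYT lam \<Longrightarrow> v \<in> colset lam T j \<Longrightarrow> 1 \<le> v \<and> v \<le> size_sh lam"
  using SYT_facts(1) unfolding colset_def Rows_def bij_betw_def by fastforce

lemma colset_disj: "T \<in> SYT lam \<Longrightarrow> j \<noteq> j' \<Longrightarrow> colset lam T j \<inter> colset lam T j' = {}"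
  using SYT_facts(1) unfolding colset_def Rows_def bij_betw_def inj_on_def by fastforce

lemma T_col_inj: "T \<in> SYT lam \<Longrightarrow> inj_on (\<lambda>i. T (i, j)) (Rows lam j)"
  using SYT_facts(1) unfolding Rows_def bij_betw_def inj_on_def by fastforce

lemma image_filter: "f ` {x\<in>S. P (f x)} = {y\<in>f ` S. P y}" by auto

lemma fac:
  assumes shp: "is_shape lam" and TS: "T \<in> SYT lam" and t': "tau' \<in> Fj lam T (Suc j)"
    and iR: "i \<in> Rows lam j"
  shows "card {r\<in>Rows lam j. T (i, j) < keyf lam tau' j r} - card {v'\<in>colset lam T j. T (i, j) < v'}
     = dep lam T (i, j) + 1"
proof -
  define v where "v = T (i, j)"
  define R where "R = Rows lam j"
  have finR: "finite R" unfolding R_def by (rule finite_Rows)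
  have injT: "inj_on (\<lambda>i. T (i, j)) R" unfolding R_def by (rule T_col_inj[OF TS])
  define Dset where "Dset = {i'. (i', j) \<in> boxes lam \<and> T (i', j) < v}"
  define Aset where "Aset = {i'. (i', Suc j) \<in> boxes lam \<and> T (i', Suc j) < v}"
  define Gset where "Gset = {i'\<in>R. v < T (i', j)}"
  have dep: "dep lam T (i, j) = card Dset - card Aset"
    unfolding dep_def Let_def Dset_def Aset_def v_def by simp
  have DR: "Dset = {i'\<in>R. T (i', j) < v}" unfolding Dset_def R_def Rows_def by auto
  have c1: "card {v'\<in>colset lam T j. v < v'} = card Gset"
  proof -
    have "{v'\<in>colset lam T j. v < v'} = (\<lambda>i. T (i, j)) ` Gset"
      unfolding Gset_def colset_def R_def by (rule image_filter[symmetric])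
    then show ?thesis using injT by (simp add: card_image inj_on_subset Gset_def)
  qed
  have c2: "card R = card Dset + 1 + card Gset"
  proof -
    have "R = insert i (Dset \<union> Gset)" using iR unfolding DR Gset_def R_def v_def
      by (auto, metis injT R_def linorder_neqE_nat inj_on_def)
    moreover have "i \<notin> Dset \<union> Gset" unfolding DR Gset_def v_def by auto
    moreover have "Dset \<inter> Gset = {}" unfolding DR Gset_def by auto
    moreover have "finite Dset" "finite Gset" unfolding DR Gset_def using finR by auto
    ultimately show ?thesis by (simp add: card_Un_disjoint)
  qed
  have bj: "bij_betw (\<lambda>r. tau' (r, Suc j)) (Rows lam (Suc j)) (colset lam T (Suc j))"
    using t' unfolding Fj_def by auto
  have vcol: "v \<in> colset lam T j" unfolding v_def colset_def using iR by auto
  have vN: "v \<le> size_sh lam" using colset_range[OF TS vcol] by simp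
  define Kset where "Kset = {r. (r, Suc j) \<in> boxes lam \<and> tau' (r, Suc j) < v}"
  have key_ne: "keyf lam tau' j r \<noteq> v" for r
  proof (cases "(r, Suc j) \<in> boxes lam")
    case True
    then have "tau' (r, Suc j) \<in> colset lam T (Suc j)" using bj unfolding bij_betw_def Rows_def by auto
    then show ?thesis using vcol colset_disj[OF TS, of j "Suc j"] unfolding keyf_def using True by auto
  next
    case False
    then show ?thesis using vN unfolding keyf_def by auto
  qed
  have K: "{r\<in>R. keyf lam tau' j r < v} = Kset"
  proof -
    have "(r, j) \<in> boxes lam" if "(r, Suc j) \<in> boxes lam" for r using that unfolding boxes_def by auto
    then show ?thesis unfolding Kset_def R_def Rows_def keyf_def using vN by auto
  qed
  have c3: "card {r\<in>R. v < keyf lam tau' j r} = card R - card Kset"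
  proof -
    have "{r\<in>R. v < keyf lam tau' j r} = R - {r\<in>R. keyf lam tau' j r < v}"
      using key_ne by (auto simp: not_less_iff_gr_or_eq)
    then show ?thesis unfolding K[symmetric] using finR by (simp add: card_Diff_subset)
  qed
  have c4: "card Kset = card Aset"
  proof -
    have injt: "inj_on (\<lambda>r. tau' (r, Suc j)) (Rows lam (Suc j))" using bj by (simp add: bij_betw_def)
    have KK: "Kset = {r\<in>Rows lam (Suc j). tau' (r, Suc j) < v}" unfolding Kset_def Rows_def by auto
    have AA: "Aset = {r\<in>Rows lam (Suc j). T (r, Suc j) < v}" unfolding Aset_def Rows_def by auto
    have "card Kset = card {w\<in>colset lam T (Suc j). w < v}"
    proof -
      have "(\<lambda>r. tau' (r, Suc j)) ` Kset = {w\<in>colset lam T (Suc j). w < v}"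
        unfolding KK using bj image_filter[of "\<lambda>r. tau' (r, Suc j)" "Rows lam (Suc j)" "\<lambda>w. w < v"]
        unfolding bij_betw_def by simp
      then show ?thesis using injt KK by (metis (no_types, lifting) card_image inj_on_subset mem_Collect_eq subsetI)
    qed
    also have "\<dots> = card Aset"
    proof -
      have "(\<lambda>r. T (r, Suc j)) ` Aset = {w\<in>colset lam T (Suc j). w < v}"
        unfolding AA colset_def using image_filter[of "\<lambda>r. T (r, Suc j)" "Rows lam (Suc j)" "\<lambda>w. w < v"]
        by simp
      then show ?thesis using T_col_inj[OF TS, of "Suc j"] AA
        by (metis (no_types, lifting) card_image inj_on_subset mem_Collect_eq subsetI)
    qed
    finally show ?thesis .
  qed
  have c5: "card Aset \<le> card Dset"
  proof -
    have "Aset \<subseteq> Dset" unfolding Aset_def Dset_def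
      using SYT_facts(3)[OF TS] unfolding boxes_def by fastforce
    moreover have "finite Dset" unfolding DR using finR by auto
    ultimately show ?thesis by (rule card_mono[rotated])
  qed
  show ?thesis unfolding dep v_def[symmetric] R_def[symmetric] c1 c3 c4 using c2 c5 by linarith
qed


lemma finite_Fj: "T \<in> SYT lam \<Longrightarrow> finite (Fj lam T j)"
proof -
  assume TS: "T \<in> SYT lam"
  have "finite {f. \<forall>c. (c \<in> boxes lam \<longrightarrow> f c \<in> {0..size_sh lam}) \<and> (c \<notin> boxes lam \<longrightarrow> f c = (0::nat))}"
    using finite_boxes by (rule finite_set_of_finite_funs) simp
  moreover have "Fj lam T j \<subseteq> {f. \<forall>c. (c \<in> boxes lam \<longrightarrow> f c \<in> {0..size_sh lam}) \<and> (c \<notin> boxes lam \<longrightarrow> f c = (0::nat))}"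
  proof (clarify, intro conjI impI)
    fix tau and a b :: nat
    assume t: "tau \<in> Fj lam T j"
    show "(a, b) \<notin> boxes lam \<Longrightarrow> tau (a, b) = 0" using t unfolding Fj_def by auto
    assume ab: "(a, b) \<in> boxes lam"
    show "tau (a, b) \<in> {0..size_sh lam}"
    proof (cases "b < j")
      case True then show ?thesis using t unfolding Fj_def by auto
    next
      case False
      then have "bij_betw (\<lambda>i. tau (i, b)) (Rows lam b) (colset lam T b)" using t unfolding Fj_def by auto
      then have "tau (a, b) \<in> colset lam T b" using ab unfolding bij_betw_def Rows_def by auto
      then show ?thesis using colset_range[OF TS] by auto
    qed
  qed
  ultimately show ?thesis by (rule finite_subset[rotated])
qed

lemma rec_step:
  fixes x :: "'a::comm_semiring_1"
  assumes shp: "is_shape lam" and TS: "T \<in> SYT lam" and jN: "j < size_sh lam"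
  shows "(\<Sum>tau\<in>Fj lam T j. x ^ wt lam tau j) =
    (\<Prod>i\<in>Rows lam j. qi x (dep lam T (i, j) + 1)) * (\<Sum>tau\<in>Fj lam T (Suc j). x ^ wt lam tau (Suc j))"
proof -
  define comb where "comb = (\<lambda>(tau'::nat\<times>nat\<Rightarrow>nat) (\<sigma>::nat\<Rightarrow>nat) c. if snd c = j then \<sigma> (fst c) else tau' c)"
  define SG where "SG = Sigma (Fj lam T (Suc j)) (\<lambda>tau'. Arr (Rows lam j) (colset lam T j) (keyf lam tau' j))"
  define g where "g = (\<lambda>(tau', \<sigma>). comb tau' \<sigma>)"
  define h where "h = (\<lambda>tau::nat\<times>nat\<Rightarrow>nat. ((\<lambda>c. if snd c = j then 0 else tau c), (\<lambda>i. tau (i, j))))"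
  define PP where "PP = (\<Prod>i\<in>Rows lam j. qi x (dep lam T (i, j) + 1))"
  have keyc: "keyf lam (comb tau' \<sigma>) j' = keyf lam tau' j'" if "Suc j' \<noteq> j" for tau' \<sigma> j'
    using that unfolding keyf_def comb_def by auto
  have colc: "(\<lambda>i. comb tau' \<sigma> (i, j')) = (if j' = j then \<sigma> else (\<lambda>i. tau' (i, j')))" for tau' \<sigma> j'
    unfolding comb_def by auto
  have g_in: "g p \<in> Fj lam T j" if "p \<in> SG" for p
  proof -
    obtain tau' \<sigma> where p: "p = (tau', \<sigma>)" by (cases p)
    have t': "tau' \<in> Fj lam T (Suc j)" and s: "\<sigma> \<in> Arr (Rows lam j) (colset lam T j) (keyf lam tau' j)"
      using that p unfolding SG_def by auto
    have z: "\<And>c. (c \<notin> boxes lam \<or> snd c < Suc j) \<Longrightarrow> tau' c = 0"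
      and bj: "\<And>j'. j' \<ge> Suc j \<Longrightarrow> bij_betw (\<lambda>i. tau' (i, j')) (Rows lam j') (colset lam T j')"
      and rw: "\<And>i j'. Suc j \<le> j' \<Longrightarrow> (i, Suc j') \<in> boxes lam \<Longrightarrow> tau' (i, j') < tau' (i, Suc j')"
      using t' unfolding Fj_def by blast+
    have sb: "bij_betw \<sigma> (Rows lam j) (colset lam T j)" and sz: "\<And>r. r \<notin> Rows lam j \<Longrightarrow> \<sigma> r = 0"
      and sk: "\<And>r. r \<in> Rows lam j \<Longrightarrow> \<sigma> r < keyf lam tau' j r"
      using s unfolding Arr_def by auto
    let ?t = "comb tau' \<sigma>"
    have "?t c = 0" if "c \<notin> boxes lam \<or> snd c < j" for c
    proof (cases "snd c = j")
      case True
      then have "fst c \<notin> Rows lam j" using that unfolding Rows_def by (cases c) auto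
      then show ?thesis using True sz unfolding comb_def by simp
    next
      case False
      then show ?thesis using that z[of c] unfolding comb_def by auto
    qed
    moreover have "bij_betw (\<lambda>i. ?t (i, j')) (Rows lam j') (colset lam T j')" if "j' \<ge> j" for j'
    proof (cases "j' = j")
      case True then show ?thesis using sb by (simp add: colc)
    next
      case False then show ?thesis using bj[of j'] that by (simp add: colc)
    qed
    moreover have "?t (i, j') < ?t (i, Suc j')" if "j \<le> j'" "(i, Suc j') \<in> boxes lam" for i j'
    proof (cases "j' = j")
      case True
      have "i \<in> Rows lam j" using that True unfolding Rows_def boxes_def by auto
      then show ?thesis using sk[of i] True that unfolding comb_def keyf_def by auto
    next
      case False
      then show ?thesis using rw[of j' i] that unfolding comb_def by auto
    qed
    ultimately show ?thesis unfolding Fj_def g_def p by auto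
  qed
  have h_in: "h tau \<in> SG" and gh: "g (h tau) = tau" if t: "tau \<in> Fj lam T j" for tau
  proof -
    have z: "\<And>c. (c \<notin> boxes lam \<or> snd c < j) \<Longrightarrow> tau c = 0"
      and bj: "\<And>j'. j' \<ge> j \<Longrightarrow> bij_betw (\<lambda>i. tau (i, j')) (Rows lam j') (colset lam T j')"
      and rw: "\<And>i j'. j \<le> j' \<Longrightarrow> (i, Suc j') \<in> boxes lam \<Longrightarrow> tau (i, j') < tau (i, Suc j')"
      using t unfolding Fj_def by blast+
    define t0 where "t0 = (\<lambda>c. if snd c = j then 0 else tau c)"
    have t0: "t0 \<in> Fj lam T (Suc j)"
    proof -
      have "t0 c = 0" if "c \<notin> boxes lam \<or> snd c < Suc j" for c
        using that z[of c] unfolding t0_def by (cases "snd c = j") auto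
      moreover have "bij_betw (\<lambda>i. t0 (i, j')) (Rows lam j') (colset lam T j')" if "j' \<ge> Suc j" for j'
        using bj[of j'] that unfolding t0_def by auto
      moreover have "t0 (i, j') < t0 (i, Suc j')" if "Suc j \<le> j'" "(i, Suc j') \<in> boxes lam" for i j'
        using rw[of j' i] that unfolding t0_def by auto
      ultimately show ?thesis unfolding Fj_def by auto
    qed
    have "(\<lambda>i. tau (i, j)) \<in> Arr (Rows lam j) (colset lam T j) (keyf lam t0 j)"
    proof -
      have "tau (r, j) = 0" if "r \<notin> Rows lam j" for r using z[of "(r, j)"] that unfolding Rows_def by auto
      moreover have "tau (r, j) < keyf lam t0 j r" if r: "r \<in> Rows lam j" for r
      proof (cases "(r, Suc j) \<in> boxes lam")
        case True
        then show ?thesis using rw[of j r] unfolding keyf_def t0_def by auto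
      next
        case False
        have "tau (r, j) \<in> colset lam T j" using bj[of j] r unfolding bij_betw_def by auto
        then have "tau (r, j) \<le> size_sh lam" using colset_range[OF TS] by blast
        then show ?thesis using False unfolding keyf_def by simp
      qed
      ultimately show ?thesis using bj[of j] unfolding Arr_def by auto
    qed
    then show "h tau \<in> SG" using t0 unfolding SG_def h_def t0_def by auto
    show "g (h tau) = tau" unfolding g_def h_def comb_def by (intro ext) auto
  qed
  have hg: "h (g p) = p" if "p \<in> SG" for p
  proof -
    obtain tau' \<sigma> where p: "p = (tau', \<sigma>)" by (cases p)
    have t': "tau' \<in> Fj lam T (Suc j)" using that p unfolding SG_def by auto
    then have zz: "\<And>c. (c \<notin> boxes lam \<or> snd c < Suc j) \<Longrightarrow> tau' c = 0" unfolding Fj_def by blast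
    then have "tau' c = 0" if "snd c = j" for c using that zz[of c] by simp
    then have A: "(\<lambda>c. if snd c = j then 0 else comb tau' \<sigma> c) = tau'"
      by (intro ext) (simp add: comb_def)
    have B: "(\<lambda>i. comb tau' \<sigma> (i, j)) = \<sigma>" by (simp add: comb_def)
    have gp: "g p = comb tau' \<sigma>" unfolding g_def p by simp
    have "h (g p) = (tau', \<sigma>)" unfolding gp h_def by (simp only: A B)
    then show ?thesis using p by simp
  qed
  have wsplit: "wt lam tau j = invcol lam tau j + wt lam tau (Suc j)" for tau
    unfolding wt_def using jN by (simp add: sum.atLeast_Suc_lessThan)
  have wcomb: "wt lam (comb tau' \<sigma>) j = ninv (Rows lam j) (keyf lam tau' j) \<sigma> + wt lam tau' (Suc j)"
    for tau' \<sigma>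
  proof -
    have "invcol lam (comb tau' \<sigma>) j = ninv (Rows lam j) (keyf lam tau' j) \<sigma>"
    proof -
      have "keyf lam (comb tau' \<sigma>) j = keyf lam tau' j" by (rule keyc) simp
      then show ?thesis unfolding invcol_def using colc[of tau' \<sigma> j] by simp
    qed
    moreover have "wt lam (comb tau' \<sigma>) (Suc j) = wt lam tau' (Suc j)"
      unfolding wt_def
    proof (intro sum.cong refl)
      fix j' assume "j' \<in> {Suc j..<size_sh lam}"
      then have "Suc j' \<noteq> j" "j' \<noteq> j" by auto
      then show "invcol lam (comb tau' \<sigma>) j' = invcol lam tau' j'"
      proof -
        have "keyf lam (comb tau' \<sigma>) j' = keyf lam tau' j'" by (rule keyc) fact
        then show ?thesis unfolding invcol_def using colc[of tau' \<sigma> j'] \<open>j' \<noteq> j\<close> by simp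
      qed
    qed
    ultimately show ?thesis using wsplit by simp
  qed
  have finF: "finite (Fj lam T (Suc j))" by (rule finite_Fj[OF TS])
  have finA: "finite (Arr (Rows lam j) (colset lam T j) (keyf lam tau' j))" for tau'
    using finite_Rows by (intro finite_Arr) (auto simp: colset_def)
  have S1: "(\<Sum>p\<in>SG. x ^ wt lam (g p) j) = (\<Sum>tau\<in>Fj lam T j. x ^ wt lam tau j)"
  proof (rule sum.reindex_bij_witness[where i=h and j=g])
    show "\<And>a. a \<in> SG \<Longrightarrow> h (g a) = a" by (rule hg)
    show "\<And>a. a \<in> SG \<Longrightarrow> g a \<in> Fj lam T j" by (rule g_in)
    show "\<And>b. b \<in> Fj lam T j \<Longrightarrow> g (h b) = b" by (rule gh)
    show "\<And>b. b \<in> Fj lam T j \<Longrightarrow> h b \<in> SG" by (rule h_in)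
  qed simp
  have S2: "(\<Sum>p\<in>SG. x ^ wt lam (g p) j) = (\<Sum>tau'\<in>Fj lam T (Suc j).
      \<Sum>\<sigma>\<in>Arr (Rows lam j) (colset lam T j) (keyf lam tau' j).
        x ^ (ninv (Rows lam j) (keyf lam tau' j) \<sigma> + wt lam tau' (Suc j)))"
  proof -
    have "(\<Sum>p\<in>SG. x ^ wt lam (g p) j) = (\<Sum>p\<in>SG. case p of (tau', \<sigma>) \<Rightarrow>
        x ^ (ninv (Rows lam j) (keyf lam tau' j) \<sigma> + wt lam tau' (Suc j)))"
      by (intro sum.cong refl) (auto simp: g_def wcomb split: prod.split)
    also have "\<dots> = (\<Sum>tau'\<in>Fj lam T (Suc j).
      \<Sum>\<sigma>\<in>Arr (Rows lam j) (colset lam T j) (keyf lam tau' j).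
        x ^ (ninv (Rows lam j) (keyf lam tau' j) \<sigma> + wt lam tau' (Suc j)))"
      unfolding SG_def using sum.Sigma[OF finF, of "\<lambda>tau'. Arr (Rows lam j) (colset lam T j) (keyf lam tau' j)"
         "\<lambda>tau' \<sigma>. x ^ (ninv (Rows lam j) (keyf lam tau' j) \<sigma> + wt lam tau' (Suc j))"] finA by simp
    finally show ?thesis .
  qed
  have S3: "(\<Sum>\<sigma>\<in>Arr (Rows lam j) (colset lam T j) (keyf lam tau' j).
        x ^ (ninv (Rows lam j) (keyf lam tau' j) \<sigma> + wt lam tau' (Suc j))) = PP * x ^ wt lam tau' (Suc j)"
    if t': "tau' \<in> Fj lam T (Suc j)" for tau'
  proof -
    have bj: "bij_betw (\<lambda>r. tau' (r, Suc j)) (Rows lam (Suc j)) (colset lam T (Suc j))"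
      using t' unfolding Fj_def by auto
    have inj: "inj_on (keyf lam tau' j) (Rows lam j)"
    proof (rule inj_onI)
      fix r r' assume rr: "r \<in> Rows lam j" "r' \<in> Rows lam j" "keyf lam tau' j r = keyf lam tau' j r'"
      have bnd: "tau' (q, Suc j) \<le> size_sh lam" if "(q, Suc j) \<in> boxes lam" for q
      proof -
        have "tau' (q, Suc j) \<in> colset lam T (Suc j)" using bj that unfolding bij_betw_def Rows_def by auto
        then show ?thesis using colset_range[OF TS] by blast
      qed
      show "r = r'"
      proof (cases "(r, Suc j) \<in> boxes lam"; cases "(r', Suc j) \<in> boxes lam")
        assume "(r, Suc j) \<in> boxes lam" "(r', Suc j) \<in> boxes lam"
        then show ?thesis using rr(3) bj unfolding keyf_def bij_betw_def inj_on_def Rows_def by auto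
      next
        assume "(r, Suc j) \<in> boxes lam" "(r', Suc j) \<notin> boxes lam"
        then show ?thesis using rr(3) bnd[of r] unfolding keyf_def by auto
      next
        assume "(r, Suc j) \<notin> boxes lam" "(r', Suc j) \<in> boxes lam"
        then show ?thesis using rr(3) bnd[of r'] unfolding keyf_def by auto
      next
        assume "(r, Suc j) \<notin> boxes lam" "(r', Suc j) \<notin> boxes lam"
        then show ?thesis using rr(3) unfolding keyf_def by auto
      qed
    qed
    have injT: "inj_on (\<lambda>i. T (i, j)) (Rows lam j)" by (rule T_col_inj[OF TS])
    have crd: "card (Rows lam j) = card (colset lam T j)" unfolding colset_def using card_image[OF injT] by simp
    have C: "(\<Sum>\<sigma>\<in>Arr (Rows lam j) (colset lam T j) (keyf lam tau' j). x ^ ninv (Rows lam j) (keyf lam tau' j) \<sigma>)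
      = (\<Prod>v\<in>colset lam T j. qi x (card {r\<in>Rows lam j. v < keyf lam tau' j r} - card {v'\<in>colset lam T j. v < v'}))"
      using finite_Rows crd inj by (intro core) (auto simp: colset_def)
    also have "\<dots> = (\<Prod>i\<in>Rows lam j. qi x (card {r\<in>Rows lam j. T (i, j) < keyf lam tau' j r}
        - card {v'\<in>colset lam T j. T (i, j) < v'}))"
      unfolding colset_def by (subst prod.reindex[OF injT]) (simp add: colset_def)
    also have "\<dots> = PP" unfolding PP_def
      by (intro prod.cong refl) (simp add: fac[OF shp TS t'])
    finally have C2: "(\<Sum>\<sigma>\<in>Arr (Rows lam j) (colset lam T j) (keyf lam tau' j). x ^ ninv (Rows lam j) (keyf lam tau' j) \<sigma>) = PP" .
    show ?thesis unfolding power_add C2[symmetric] by (simp add: sum_distrib_right)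
  qed
  show ?thesis unfolding S1[symmetric] S2 PP_def[symmetric] using S3
    by (simp add: sum_distrib_left)
qed


lemma rec_all:
  fixes x :: "'a::comm_semiring_1"
  assumes shp: "is_shape lam" and TS: "T \<in> SYT lam"
  shows "j \<le> size_sh lam \<Longrightarrow> (\<Sum>tau\<in>Fj lam T j. x ^ wt lam tau j) =
    (\<Prod>j'\<in>{j..<size_sh lam}. \<Prod>i\<in>Rows lam j'. qi x (dep lam T (i, j') + 1))"
proof (induction "size_sh lam - j" arbitrary: j)
  case 0
  then have jN: "j = size_sh lam" by simp
  have "Fj lam T j = {\<lambda>_. 0}"
  proof
    show "Fj lam T j \<subseteq> {\<lambda>_. 0}"
    proof
      fix tau assume t: "tau \<in> Fj lam T j"
      have "tau c = 0" for c
      proof -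
        have "c \<notin> boxes lam \<or> snd c < j" using box_col jN by (cases c) auto
        then show ?thesis using t unfolding Fj_def by blast
      qed
      then show "tau \<in> {\<lambda>_. 0}" by auto
    qed
    have "Rows lam j' = {}" if "j' \<ge> j" for j' using box_col jN that unfolding Rows_def by fastforce
    then show "{\<lambda>_. 0} \<subseteq> Fj lam T j" unfolding Fj_def colset_def
      using jN by (auto simp: bij_betw_def dest: box_col)
  qed
  then show ?case using jN unfolding wt_def by simp
next
  case (Suc d)
  then have jN: "j < size_sh lam" by simp
  have IH: "(\<Sum>tau\<in>Fj lam T (Suc j). x ^ wt lam tau (Suc j)) =
    (\<Prod>j'\<in>{Suc j..<size_sh lam}. \<Prod>i\<in>Rows lam j'. qi x (dep lam T (i, j') + 1))"
    using Suc.hyps(1)[of "Suc j"] Suc.hyps(2) jN by simp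
  show ?case unfolding rec_step[OF shp TS jN] IH using jN by (simp add: prod.atLeast_Suc_lessThan)
qed

lemma prod_boxes:
  "(\<Prod>j\<in>{0..<size_sh lam}. \<Prod>i\<in>Rows lam j. f (i, j)) = (\<Prod>c\<in>boxes lam. f c)"
proof -
  have "(\<Prod>j\<in>{0..<size_sh lam}. \<Prod>i\<in>Rows lam j. f (i, j)) =
      (\<Prod>p\<in>Sigma {0..<size_sh lam} (Rows lam). f (snd p, fst p))"
    using finite_Rows by (subst prod.Sigma) (auto simp: case_prod_beta)
  also have "\<dots> = (\<Prod>c\<in>(\<lambda>p. (snd p, fst p)) ` Sigma {0..<size_sh lam} (Rows lam). f c)"
    by (subst prod.reindex) (auto simp: inj_on_def)
  also have "(\<lambda>p. (snd p, fst p)) ` Sigma {0..<size_sh lam} (Rows lam) = boxes lam"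
    unfolding Rows_def using box_col by force
  finally show ?thesis .
qed

theorem mainTheorem3:
  assumes "is_shape lam" and "T \<in> SYT lam"
  shows "chi lam T = (\<Prod>c \<in> boxes lam. qint (dep lam T c + 1))"
proof -
  let ?X = "[:0, 1:] :: int poly"
  let ?F = "Fj lam T 0"
  define M where "M = card (boxes lam) * card (boxes lam)"
  have F0: "{tau. row_standard lam tau \<and> st lam tau = T} = ?F" by (rule F0_eq[OF assms])
  have rsF: "row_standard lam tau" if "tau \<in> ?F" for tau using that F0 by blast
  have Sk: "S_kT lam k T = {tau\<in>?F. inv_count lam tau = k}" for k
    unfolding S_kT_def S_k_def using F0 by blast
  have invM: "inv_count lam tau \<le> M" for tau
  proof -
    have "inv_pairs lam tau \<subseteq> boxes lam \<times> boxes lam" unfolding inv_pairs_def by auto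
    then have "card (inv_pairs lam tau) \<le> card (boxes lam \<times> boxes lam)"
      using finite_boxes by (intro card_mono) auto
    then show ?thesis unfolding inv_count_def M_def by (simp add: card_cartesian_product)
  qed
  have finF: "finite ?F" by (rule finite_Fj[OF assms(2)])
  have "chi lam T = (\<Sum>k\<in>{..M}. of_nat (card {tau\<in>?F. inv_count lam tau = k}) * ?X ^ k)"
    unfolding chi_def M_def[symmetric] Sk by simp
  also have "\<dots> = (\<Sum>k\<in>{..M}. \<Sum>tau\<in>{tau\<in>?F. inv_count lam tau = k}. ?X ^ inv_count lam tau)"
    by (intro sum.cong refl) simp
  also have "\<dots> = (\<Sum>tau\<in>?F. ?X ^ inv_count lam tau)"
    using finF invM by (intro sum.group) auto
  also have "\<dots> = (\<Sum>tau\<in>?F. ?X ^ wt lam tau 0)"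
    using rsF inv_eq[OF assms(1)] unfolding row_standard_def by (intro sum.cong refl) auto
  also have "\<dots> = (\<Prod>j'\<in>{0..<size_sh lam}. \<Prod>i\<in>Rows lam j'. qi ?X (dep lam T (i, j') + 1))"
    by (rule rec_all[OF assms]) simp
  also have "\<dots> = (\<Prod>c\<in>boxes lam. qi ?X (dep lam T c + 1))" by (rule prod_boxes)
  also have "\<dots> = (\<Prod>c \<in> boxes lam. qint (dep lam T c + 1))" unfolding qint_def qi_def by simp
  finally show ?thesis .
qed

end
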